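(* Let $\mathcal Z=\mathbb R^d$, let $\mathcal U$ be a space on which densities are taken, let $\mathcal X$ be an observation space, and let $p_{X,Z}$ be a joint density on $\mathcal X\times\mathcal Z$ with posterior $p_{Z|X}(\cdot\mid x)$. Let $q_W$ be a density on $\mathcal Z$. Consider a family of continuously-indexed flow (CIF) inference models indexed by $\phi\in\Phi$, each consisting of a conditional density $q^\phi_{U|W}(\cdot\mid w)$ on $\mathcal U$ for $w\in\mathcal Z$, a conditional density $r^\phi_{U|Z}(\cdot\mid z)$ on $\mathcal U$ for $z\in\mathcal Z$, and a map $G_\phi:\mathcal Z\times\mathcal U\to\mathcal Z$ such that $G_\phi(\cdot;u)$ is a differentiable bijection for every $u\in\mathcal U$. Let $q^\phi_Z$ denote the distribution of $Z=G_\phi(W;U)$ where $W\sim q_W$ and $U\mid W\sim q^\phi_{U|W}(\cdot\mid W)$, and define, for $x\in\mathcal X$, $$\mathcal L_2^\phi(x)=\mathbb E_{w\sim q_W,\,u\sim q^\phi_{U|W}(\cdot\mid w)}\left[\log\frac{p_{X,Z}(x,G_\phi(w;u))\cdot r^\phi_{U|Z}(u\mid G_\phi(w;u))}{q_W(w)\cdot q^\phi_{U|W}(u\mid w)\cdot|\det \mathrm D_wG_\phi(w;u)|^{-1}}\right].$$ Suppose there exists $\psi\in\Phi$ such that for some bijection $g:\mathcal Z\to\mathcal Z$ we have $G_\psi(\cdot;u)=g(\cdot)$ for all $u\in\mathcal U$, and for some density $\rho$ on $\mathcal U$ we have $q^\psi_{U|W}(\cdot\mid w)=r^\psi_{U|Z}(\cdot\mid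 z)=\rho(\cdot)$ for all $w,z\in\mathcal Z$. Then for any $\phi\in\Phi$ and any $x\in\mathcal X$ with $\mathcal L_2^\phi(x)\ge\mathcal L_2^\psi(x)$, $$\mathrm{KL}\big(q^\phi_Z\,\|\,p_{Z|X}(\cdot\mid x)\big)\le \mathrm{KL}\big(g_\# q_W\,\|\,p_{Z|X}(\cdot\mid x)\big),$$ where $g_\# q_W$ is the pushforward of $q_W$ under $g$.
   Context: $\mathrm{KL}(\cdot\|\cdot)$ denotes the Kullback–Leibler divergence; $\mathrm D_wG_\phi(w;u)$ is the Jacobian of $G_\phi$ with respect to its first argument. All densities, expectations and logarithms are assumed well defined and finite, and $p_X(x)=\int p_{X,Z}(x,z)\,\mathrm dz$ is the marginal with $p_{Z|X}(z\mid x)=p_{X,Z}(x,z)/p_X(x)$. *)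

theory Defs
  imports "HOL-Analysis.Analysis" "HOL-Probability.Probability"
begin

definition is_density :: "'a measure \<Rightarrow> ('a \<Rightarrow> real) \<Rightarrow> bool" where
  "is_density M f \<longleftrightarrow> f \<in> borel_measurable M \<and> (\<forall>x\<in>space M. 0 \<le> f x)
      \<and> (\<integral>\<^sup>+ x. ennreal (f x) \<partial>M) = 1"

text \<open>Kullback-Leibler divergence KL(N || M) (natural logarithm).\<close>
definition KL :: "'a measure \<Rightarrow> 'a measure \<Rightarrow> real" where
  "KL N M = KL_divergence (exp 1) M N"

definition marginal :: "('x \<Rightarrow> 'z::euclidean_space \<Rightarrow> real) \<Rightarrow> 'x \<Rightarrow> real" where
  "marginal p x = (\<integral> z. p x z \<partial>lborel)"

definition posterior :: "('x \<Rightarrow> 'z::euclidean_space \<Rightarrow> real) \<Rightarrow> 'x \<Rightarrow> 'z \<Rightarrow> real" where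
  "posterior p x z = p x z / marginal p x"

definition posterior_measure :: "('x \<Rightarrow> 'z::euclidean_space \<Rightarrow> real) \<Rightarrow> 'x \<Rightarrow> 'z measure" where
  "posterior_measure p x = density lborel (\<lambda>z. ennreal (posterior p x z))"

text \<open>Joint law of (W,U): W ~ qW (Lebesgue density), U | W=w ~ qUW w (density w.r.t. muU).\<close>
definition joint_WU :: "('z::euclidean_space \<Rightarrow> real) \<Rightarrow> 'u measure \<Rightarrow> ('z \<Rightarrow> 'u \<Rightarrow> real)
    \<Rightarrow> ('z \<times> 'u) measure" where
  "joint_WU qW muU qUW = density (lborel \<Otimes>\<^sub>M muU) (\<lambda>(w,u). ennreal (qW w * qUW w u))"

definition qZ :: "('z::euclidean_space \<Rightarrow> real) \<Rightarrow> 'u measure \<Rightarrow> ('z \<Rightarrow> 'u \<Rightarrow> real)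
    \<Rightarrow> ('z \<Rightarrow> 'u \<Rightarrow> 'z) \<Rightarrow> 'z measure" where
  "qZ qW muU qUW G = distr (joint_WU qW muU qUW) lborel (\<lambda>(w,u). G w u)"

definition jacdet :: "(real^'n \<Rightarrow> 'u \<Rightarrow> real^'n) \<Rightarrow> real^'n \<Rightarrow> 'u \<Rightarrow> real" where
  "jacdet G w u = det (matrix (frechet_derivative (\<lambda>v. G v u) (at w)))"

definition L2_integrand :: "('x \<Rightarrow> real^'n \<Rightarrow> real) \<Rightarrow> (real^'n \<Rightarrow> real)
    \<Rightarrow> (real^'n \<Rightarrow> 'u \<Rightarrow> real) \<Rightarrow> (real^'n \<Rightarrow> 'u \<Rightarrow> real) \<Rightarrow> (real^'n \<Rightarrow> 'u \<Rightarrow> real^'n)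
    \<Rightarrow> 'x \<Rightarrow> (real^'n) \<times> 'u \<Rightarrow> real" where
  "L2_integrand p qW qUW rUZ G x = (\<lambda>(w,u).
      (p x (G w u) * rUZ (G w u) u) / (qW w * qUW w u * inverse \<bar>jacdet G w u\<bar>))"

definition L2 :: "('x \<Rightarrow> real^'n \<Rightarrow> real) \<Rightarrow> (real^'n \<Rightarrow> real) \<Rightarrow> 'u measure
    \<Rightarrow> (real^'n \<Rightarrow> 'u \<Rightarrow> real) \<Rightarrow> (real^'n \<Rightarrow> 'u \<Rightarrow> real) \<Rightarrow> (real^'n \<Rightarrow> 'u \<Rightarrow> real^'n)
    \<Rightarrow> 'x \<Rightarrow> real" where
  "L2 p qW muU qUW rUZ G x =
     (\<integral> wu. ln (L2_integrand p qW qUW rUZ G x wu) \<partial>(joint_WU qW muU qUW))"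

end

theory Submission
  imports Defs
begin

typedef ('a::finite) wo = "{..<CARD('a)}" morphisms wo_rep wo_abs
  by (rule exI[of _ 0]) simp

instantiation wo :: (finite) linorder
begin
definition less_eq_wo :: "'a wo \<Rightarrow> 'a wo \<Rightarrow> bool" where "less_eq_wo a b \<longleftrightarrow> wo_rep a \<le> wo_rep b"
definition less_wo :: "'a wo \<Rightarrow> 'a wo \<Rightarrow> bool" where "less_wo a b \<longleftrightarrow> wo_rep a < wo_rep b"
instance by standard (auto simp: less_eq_wo_def less_wo_def wo_rep_inject)
end

instance wo :: (finite) finite
proof
  have "(UNIV :: 'a wo set) = wo_abs ` {..<CARD('a)}"
    using type_definition.Abs_image[OF type_definition_wo[where 'a='a]] by simp
  then show "finite (UNIV :: 'a wo set)" by (metis finite_imageI finite_lessThan)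
qed

instance wo :: (finite) wellorder
proof
  fix P :: "'a wo \<Rightarrow> bool" and a
  assume H: "\<And>x. (\<And>y. y < x \<Longrightarrow> P y) \<Longrightarrow> P x"
  have "\<And>n x. wo_rep x = n \<Longrightarrow> P x"
  proof -
    fix n show "\<And>x. wo_rep x = n \<Longrightarrow> P x"
      by (induction n rule: less_induct) (metis H less_wo_def)
  qed
  then show "P a" by blast
qed

lemma card_wo: "CARD('a::finite wo) = CARD('a)"
  using type_definition.card[OF type_definition_wo] by simp

lemma ex_bij_wo: "\<exists>s :: 'a::finite wo \<Rightarrow> 'a. bij s"
proof -
  obtain s where "bij_betw s (UNIV :: 'a wo set) (UNIV :: 'a set)"
    using finite_same_card_bij[of "UNIV :: 'a wo set" "UNIV :: 'a set"] card_wo by auto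
  then show ?thesis by blast
qed

lemma det_reindex:
  fixes A :: "'a::comm_ring_1^'d::finite^'d" and s :: "'n::finite \<Rightarrow> 'd"
  assumes s: "bij s"
  shows "det ((\<chi> i j. A$(s i)$(s j)) :: 'a^'n^'n) = det A"
proof -
  let ?c = "\<lambda>p. s \<circ> p \<circ> inv s"
  have mp: "map_permutation UNIV s p = ?c p" for p
    using s by (simp add: map_permutation_def restrict_id_def bij_is_surj fun_eq_iff)
  have sg: "p permutes UNIV \<Longrightarrow> sign (?c p) = sign p" for p
    using sign_map_permutation[of s UNIV p] bij_is_inj[OF s] mp by simp
  have pc: "p permutes UNIV \<Longrightarrow> ?c p permutes UNIV" for p
    using s permutes_bij[of p UNIV] by (meson bij_comp bij_imp_bij_inv bij_imp_permutes iso_tuple_UNIV_I)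
  show ?thesis unfolding det_def
  proof (rule sum.reindex_bij_witness[where j = ?c and i = "\<lambda>q. inv s \<circ> q \<circ> s"])
    fix p :: "'n \<Rightarrow> 'n" assume p: "p \<in> {p. p permutes UNIV}"
    show "inv s \<circ> ?c p \<circ> s = p" by (simp add: fun_eq_iff inv_f_f[OF bij_is_inj[OF s]])
    show "?c p \<in> {p. p permutes UNIV}" using pc p by auto
    have inj: "inj s" and sur: "range s = UNIV" using s by (simp_all add: bij_is_inj bij_is_surj)
    have "(\<Prod>k\<in>UNIV. A $ k $ ?c p k) = (\<Prod>k\<in>range s. A $ k $ ?c p k)" by (simp only: sur)
    also have "\<dots> = (\<Prod>i\<in>UNIV. A $ s i $ ?c p (s i))"
      using prod.reindex[OF inj, of "\<lambda>k. A $ k $ ?c p k"] by (simp add: o_def)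
    also have "\<dots> = (\<Prod>i\<in>UNIV. A $ s i $ s (p i))"
      by (simp add: inv_f_f[OF inj])
    finally show "of_int (sign (?c p)) * (\<Prod>k\<in>UNIV. A $ k $ ?c p k) =
        of_int (sign p) * (\<Prod>i\<in>UNIV. (\<chi> i j. A$(s i)$(s j)) $ i $ p i)"
      using sg p by simp
  next
    fix q :: "'d \<Rightarrow> 'd" assume q: "q \<in> {p. p permutes UNIV}"
    show "?c (inv s \<circ> q \<circ> s) = q" by (simp add: fun_eq_iff surj_f_inv_f[OF bij_is_surj[OF s]])
    have qb: "bij q" using q permutes_bij by blast
    have "bij (inv s \<circ> q \<circ> s)"
      using bij_comp[OF s bij_comp[OF qb bij_imp_bij_inv[OF s]]] by (simp add: o_assoc)
    then show "inv s \<circ> q \<circ> s \<in> {p. p permutes UNIV}"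
      using bij_imp_permutes[of "inv s \<circ> q \<circ> s" UNIV] by simp
  qed
qed

lemma abs_int_vec_iff:
  fixes h :: "'a::euclidean_space \<Rightarrow> real"
  shows "(\<lambda>x. vec (h x) :: real^1) absolutely_integrable_on S \<longleftrightarrow> h absolutely_integrable_on S"
proof -
  have "(\<lambda>x. vec (h x) :: real^1) absolutely_integrable_on S \<longleftrightarrow>
        (\<forall>b\<in>Basis. (\<lambda>x. (vec (h x) :: real^1) \<bullet> b) absolutely_integrable_on S)"
    by (rule absolutely_integrable_componentwise_iff)
  also have "\<dots> \<longleftrightarrow> h absolutely_integrable_on S"
    by (auto simp: Basis_vec_def inner_axis)
  finally show ?thesis .
qed

lemma nn_infinite_if_not_int:
  fixes h :: "'a::euclidean_space \<Rightarrow> real"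
  assumes m: "h \<in> borel_measurable lebesgue" and nn: "\<And>x. 0 \<le> h x"
    and ni: "\<not> integrable lebesgue h"
  shows "(\<integral>\<^sup>+x. ennreal (h x) \<partial>lborel) = \<infinity>"
proof (rule ccontr)
  assume "(\<integral>\<^sup>+x. ennreal (h x) \<partial>lborel) \<noteq> \<infinity>"
  then have "(\<integral>\<^sup>+x. ennreal (h x) \<partial>lebesgue) \<noteq> \<infinity>" by (simp add: nn_integral_completion)
  then obtain r where "(\<integral>\<^sup>+x. ennreal (h x) \<partial>lebesgue) = ennreal r"
    by (cases "(\<integral>\<^sup>+x. ennreal (h x) \<partial>lebesgue)" rule: ennreal_cases) auto
  then have "integrable lebesgue h" using m nn by (intro integrableI_nn_integral_finite) auto
  with ni show False by simp
qed

lemma cov_n: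
  fixes g :: "real^'n::{finite,wellorder} \<Rightarrow> real^'n::_" and f :: "real^'n::_ \<Rightarrow> real"
  assumes inj: "inj g" and der: "\<And>x. (g has_derivative g' x) (at x)"
    and f: "f \<in> borel_measurable borel" and f0: "\<And>y. 0 \<le> f y"
  shows "(\<integral>\<^sup>+x. ennreal (\<bar>det (matrix (g' x))\<bar> * f (g x)) \<partial>lborel)
       = (\<integral>\<^sup>+y. ennreal (f y) * indicator (range g) y \<partial>lborel)"
proof -
  have cont: "continuous_on UNIV g"
    using der by (meson continuous_at_imp_continuous_on has_derivative_continuous)
  have op: "open (range g)" by (rule invariance_of_domain) (use cont inj in auto)
  have rg: "range g \<in> sets lebesgue" using op by simp
  let ?F = "\<lambda>x. \<bar>det (matrix (g' x))\<bar> * f (g x)"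
  have gm: "g \<in> borel_measurable borel" using cont by (simp add: borel_measurable_continuous_onI)
  have dm: "(\<lambda>x. det (matrix (g' x))) \<in> borel_measurable lebesgue"
    using borel_measurable_det_Jacobian[of UNIV g g'] der by simp
  have fgm: "(\<lambda>x. f (g x)) \<in> borel_measurable lebesgue"
    using measurable_compose[OF gm f] by (simp add: measurable_completion)
  have Fm: "?F \<in> borel_measurable lebesgue" using dm fgm by measurable
  have F0: "0 \<le> ?F x" for x using f0 by simp
  have cov: "(\<lambda>x. \<bar>det (matrix (g' x))\<bar> *\<^sub>R vec (f (g x)) :: real^1) absolutely_integrable_on UNIV \<and>
       integral UNIV (\<lambda>x. \<bar>det (matrix (g' x))\<bar> *\<^sub>R vec (f (g x)) :: real^1) = b
     \<longleftrightarrow> (\<lambda>y. vec (f y) :: real^1) absolutely_integrable_on (range g) \<and> integral (range g) (\<lambda>y. vec (f y) :: real^1) = b" for b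
    using has_absolute_integral_change_of_variables[of UNIV g g' "\<lambda>y. vec (f y) :: real^1" b] der inj
    by simp
  have vF: "(\<lambda>x. \<bar>det (matrix (g' x))\<bar> *\<^sub>R vec (f (g x)) :: real^1) = (\<lambda>x. vec (?F x))"
    by (simp add: fun_eq_iff vec_eq_iff)
  show ?thesis
  proof (cases "f absolutely_integrable_on (range g)")
    case True
    then have "(\<lambda>y. vec (f y) :: real^1) absolutely_integrable_on (range g)" by (simp add: abs_int_vec_iff)
    with cov[of "integral (range g) (\<lambda>y. vec (f y) :: real^1)"]
    have c1: "(\<lambda>x. vec (?F x) :: real^1) absolutely_integrable_on UNIV"
      and c2: "integral UNIV (\<lambda>x. vec (?F x) :: real^1) = integral (range g) (\<lambda>y. vec (f y) :: real^1)"
      by (auto simp: vF)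
    have Fi: "?F absolutely_integrable_on UNIV" using c1 by (simp add: abs_int_vec_iff)
    have "integral UNIV ?F = integral (range g) f"
    proof -
      have "integral UNIV ?F = integral UNIV (\<lambda>x. vec (?F x) :: real^1) $ 1"
        using integral_component_eq_cart[of "\<lambda>x. vec (?F x) :: real^1" UNIV 1] c1
        by (simp add: set_lebesgue_integral_eq_integral(1))
      also have "\<dots> = integral (range g) (\<lambda>y. vec (f y) :: real^1) $ 1" by (simp add: c2)
      also have "\<dots> = integral (range g) f"
        using integral_component_eq_cart[of "\<lambda>y. vec (f y) :: real^1" "range g" 1] \<open>(\<lambda>y. vec (f y) :: real^1) absolutely_integrable_on (range g)\<close>
        by (simp add: set_lebesgue_integral_eq_integral(1))
      finally show ?thesis .
    qed
    moreover have "(?F has_integral integral UNIV ?F) UNIV"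
      using Fi set_lebesgue_integral_eq_integral(1) integrable_integral by blast
    moreover have "(f has_integral integral (range g) f) (range g)"
      using True set_lebesgue_integral_eq_integral(1) integrable_integral by blast
    moreover have "\<And>x. ennreal (f x * indicator (range g) x) = ennreal (f x) * indicator (range g) x"
      by (simp add: indicator_def)
    ultimately show ?thesis
      using nn_integral_has_integral_lebesgue[of UNIV ?F] nn_integral_has_integral_lebesgue[of "range g" f] F0 f0
      by (simp add: mult.commute)
  next
    case False
    then have "\<not> (\<lambda>y. vec (f y) :: real^1) absolutely_integrable_on (range g)" by (simp add: abs_int_vec_iff)
    then have "\<not> (\<lambda>x. vec (?F x) :: real^1) absolutely_integrable_on UNIV"
      using cov[of "integral UNIV (\<lambda>x. vec (?F x) :: real^1)"] by (auto simp: vF)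
    then have "\<not> ?F absolutely_integrable_on UNIV" by (simp add: abs_int_vec_iff)
    then have n1: "\<not> integrable lebesgue ?F" by (simp add: set_integrable_def)
    have n2: "\<not> integrable lebesgue (\<lambda>y. indicator (range g) y * f y)"
      using False by (simp add: set_integrable_def)
    have m2: "(\<lambda>y. indicator (range g) y * f y) \<in> borel_measurable lebesgue"
    proof -
      have fl: "f \<in> borel_measurable lebesgue" using f by (simp add: measurable_completion)
      show ?thesis by (intro borel_measurable_times borel_measurable_indicator rg fl)
    qed
    show ?thesis
      using nn_infinite_if_not_int[OF Fm F0 n1] nn_infinite_if_not_int[OF m2 _ n2] f0
      by (simp add: mult.commute ennreal_mult' ennreal_indicator)
  qed
qed

lemma meas_nth[measurable]: "(\<lambda>y::real^'d. y $ i) \<in> borel_measurable borel"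
  by (rule borel_measurable_continuous_onI[OF linear_continuous_on[OF bounded_linear_vec_nth]])

lemma deriv_entry_meas:
  fixes g :: "'a::euclidean_space \<Rightarrow> real^'d"
  assumes der: "\<And>x. (g has_derivative g' x) (at x)"
  shows "(\<lambda>x. g' x v $ i) \<in> borel_measurable borel"
proof (rule borel_measurable_LIMSEQ_real[where u = "\<lambda>n x. (g (x + inverse (real (Suc n)) *\<^sub>R v) $ i - g x $ i) / inverse (real (Suc n))"])
  have cont: "continuous_on UNIV g"
    using der by (meson continuous_at_imp_continuous_on has_derivative_continuous)
  then have gm: "g \<in> borel_measurable borel" by (simp add: borel_measurable_continuous_onI)
  fix n :: nat
  have "(\<lambda>x. g (x + inverse (real (Suc n)) *\<^sub>R v)) \<in> borel_measurable borel"
    using measurable_compose[OF _ gm, of "\<lambda>x. x + inverse (real (Suc n)) *\<^sub>R v"] by simp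
  then have h1: "(\<lambda>x. g (x + inverse (real (Suc n)) *\<^sub>R v) $ i) \<in> borel_measurable borel"
    using measurable_compose[OF _ meas_nth] by blast
  have h2: "(\<lambda>x. g x $ i) \<in> borel_measurable borel"
    using measurable_compose[OF gm meas_nth] by blast
  from h1 h2 show "(\<lambda>x. (g (x + inverse (real (Suc n)) *\<^sub>R v) $ i - g x $ i) / inverse (real (Suc n))) \<in> borel_measurable borel"
    by (intro borel_measurable_divide borel_measurable_diff) auto
next
  fix x
  let ?phi = "\<lambda>t. g (x + t *\<^sub>R v) $ i"
  have lin: "linear (g' x)" using der has_derivative_linear by blast
  have d1: "((\<lambda>t::real. x + t *\<^sub>R v) has_derivative (\<lambda>t. t *\<^sub>R v)) (at 0)"
    by (auto intro!: derivative_eq_intros)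
  have d2: "((\<lambda>t. g (x + t *\<^sub>R v)) has_derivative (\<lambda>t. g' x (t *\<^sub>R v))) (at 0)"
    using has_derivative_compose[OF d1, of g "g' x"] der[of x] by (simp add: o_def)
  have d3: "(?phi has_derivative (\<lambda>t. g' x (t *\<^sub>R v) $ i)) (at 0)"
    using has_derivative_compose[OF d2 bounded_linear_imp_has_derivative[OF bounded_linear_vec_nth[of i]]]
    by (simp add: o_def)
  have "(\<lambda>t. g' x (t *\<^sub>R v) $ i) = (\<lambda>t. (g' x v $ i) * t)"
    using lin by (simp add: fun_eq_iff linear_scale mult.commute)
  with d3 have "(?phi has_field_derivative (g' x v $ i)) (at 0)"
    by (simp add: has_field_derivative_def)
  then have lim: "((\<lambda>t. (?phi t - ?phi 0) / (t - 0)) \<longlongrightarrow> g' x v $ i) (at 0)"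
    by (rule has_field_derivative_iff[THEN iffD1])
  have fl: "filterlim (\<lambda>n. inverse (real (Suc n))) (at 0) sequentially"
    using LIMSEQ_inverse_real_of_nat by (auto simp: filterlim_at)
  show "(\<lambda>n. (g (x + inverse (real (Suc n)) *\<^sub>R v) $ i - g x $ i) / inverse (real (Suc n))) \<longlonglongrightarrow> g' x v $ i"
    using filterlim_compose[OF lim fl] by (simp add: o_def)
qed

lemma det_jac_meas:
  fixes g :: "real^'d \<Rightarrow> real^'d"
  assumes der: "\<And>x. (g has_derivative g' x) (at x)"
  shows "(\<lambda>x. det (matrix (g' x))) \<in> borel_measurable borel"
proof -
  have [measurable]: "(\<lambda>x. g' x (axis j 1) $ i) \<in> borel_measurable borel" for i j
    by (rule deriv_entry_meas[OF der])
  have "(\<lambda>x. det (matrix (g' x))) = (\<lambda>x. \<Sum>p\<in>{p. p permutes UNIV}. of_int (sign p) * (\<Prod>i\<in>UNIV. g' x (axis (p i) 1) $ i))"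
    by (simp add: det_def matrix_def)
  then show ?thesis by simp
qed

definition perm_vec :: "('n \<Rightarrow> 'd) \<Rightarrow> real^'d \<Rightarrow> real^'n" where
  "perm_vec s x = (\<chi> i. x $ s i)"

lemma perm_vec_inv:
  assumes "bij s" shows "perm_vec (inv s) (perm_vec s x) = x" "perm_vec s (perm_vec (inv s) y) = y"
  using assms by (simp_all add: perm_vec_def vec_eq_iff bij_is_surj surj_f_inv_f bij_is_inj inv_f_f)

lemma linear_perm_vec: "linear (perm_vec s)"
  by (auto simp: linear_iff perm_vec_def vec_eq_iff)

lemma bl_perm_vec: "bounded_linear (perm_vec s)"
  using linear_perm_vec linear_conv_bounded_linear by blast

lemma perm_vec_meas[measurable]: "perm_vec s \<in> borel_measurable borel"
  by (rule borel_measurable_continuous_onI[OF linear_continuous_on[OF bl_perm_vec]])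

lemma prod_Basis_cart: "(\<Prod>b\<in>(Basis :: (real^'n) set). f b) = (\<Prod>i\<in>UNIV. f (axis i 1))"
proof -
  have eq: "(Basis :: (real^'n) set) = (\<lambda>i. axis i 1) ` UNIV"
    by (auto simp: Basis_vec_def)
  have inj: "inj (\<lambda>i. axis i (1::real) :: real^'n)"
    by (auto simp: inj_def axis_eq_axis)
  have "(\<Prod>b\<in>(Basis :: (real^'n) set). f b) = (\<Prod>b\<in>(\<lambda>i. axis i 1) ` UNIV. f b)" by (simp only: eq)
  also have "\<dots> = (\<Prod>i\<in>UNIV. f (axis i 1))" using prod.reindex[OF inj, of f] by (simp add: o_def)
  finally show ?thesis .
qed

lemma lborel_perm:
  fixes s :: "'n::finite \<Rightarrow> 'd::finite"
  assumes s: "bij s"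
  shows "distr lborel borel (perm_vec s) = lborel"
proof (rule lborel_eqI[symmetric])
  fix l u :: "real^'n"
  assume le: "\<And>b. b \<in> Basis \<Longrightarrow> l \<bullet> b \<le> u \<bullet> b"
  then have le': "l $ i \<le> u $ i" for i
    using le[of "axis i 1"] by (simp add: cart_eq_inner_axis)
  have pre: "perm_vec s -` box l u = box (perm_vec (inv s) l) (perm_vec (inv s) u)"
  proof -
    have "x \<in> perm_vec s -` box l u \<longleftrightarrow> x \<in> box (perm_vec (inv s) l) (perm_vec (inv s) u)" for x
    proof -
      have "x \<in> perm_vec s -` box l u \<longleftrightarrow> (\<forall>i. l $ i < x $ s i \<and> x $ s i < u $ i)"
        by (simp add: mem_box_cart perm_vec_def)
      also have "\<dots> \<longleftrightarrow> (\<forall>j. l $ inv s j < x $ j \<and> x $ j < u $ inv s j)"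
        using s by (metis bij_inv_eq_iff)
      also have "\<dots> \<longleftrightarrow> x \<in> box (perm_vec (inv s) l) (perm_vec (inv s) u)"
        by (simp add: mem_box_cart perm_vec_def)
      finally show ?thesis .
    qed
    then show ?thesis by blast
  qed
  have cond: "\<forall>b\<in>Basis. perm_vec (inv s) l \<bullet> b \<le> perm_vec (inv s) u \<bullet> b"
    using le' by (auto simp: Basis_vec_def inner_axis perm_vec_def)
  have "emeasure (distr lborel borel (perm_vec s)) (box l u)
      = emeasure lborel (box (perm_vec (inv s) l) (perm_vec (inv s) u))"
    by (simp add: emeasure_distr pre)
  also have "\<dots> = (\<Prod>j\<in>UNIV. ennreal (u $ inv s j - l $ inv s j))"
    using le' cond by (simp add: emeasure_lborel_box_eq prod_Basis_cart perm_vec_def inner_axis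
        cart_eq_inner_axis[symmetric] prod_ennreal[symmetric] prod_nonneg)
  also have "\<dots> = (\<Prod>i\<in>UNIV. ennreal (u $ i - l $ i))"
    using prod.reindex[OF bij_is_inj[OF bij_imp_bij_inv[OF s]], of "\<lambda>i. ennreal (u $ i - l $ i)"]
      bij_is_surj[OF bij_imp_bij_inv[OF s]] by (simp add: o_def)
  also have "\<dots> = ennreal (\<Prod>b\<in>Basis. (u - l) \<bullet> b)"
    using le' by (simp add: prod_Basis_cart inner_axis cart_eq_inner_axis[symmetric] prod_ennreal[symmetric])
  finally show "emeasure (distr lborel borel (perm_vec s)) (box l u) = ennreal (\<Prod>b\<in>Basis. (u - l) \<bullet> b)" .
qed simp

lemma perm_vec_axis:
  assumes s: "bij s"
  shows "perm_vec (inv s) (axis j 1) = axis (s j) (1::real)"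
  unfolding perm_vec_def axis_def
  by (simp add: vec_eq_iff) (metis bij_inv_eq_iff s)

lemma cov_d:
  fixes g :: "real^'d::finite \<Rightarrow> real^'d" and f :: "real^'d \<Rightarrow> real"
  assumes inj: "inj g" and der: "\<And>x. (g has_derivative g' x) (at x)"
    and f: "f \<in> borel_measurable borel" and f0: "\<And>y. 0 \<le> f y"
  shows "(\<integral>\<^sup>+x. ennreal (\<bar>det (matrix (g' x))\<bar> * f (g x)) \<partial>lborel)
       = (\<integral>\<^sup>+y. ennreal (f y) * indicator (range g) y \<partial>lborel)"
proof -
  obtain s :: "'d wo \<Rightarrow> 'd" where s: "bij s" using ex_bij_wo by blast
  define e :: "real^'d \<Rightarrow> real^'d wo" where "e = perm_vec s"
  define e' :: "real^'d wo \<Rightarrow> real^'d" where "e' = perm_vec (inv s)"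
  have ee: "\<And>y. e (e' y) = y" "\<And>x. e' (e x) = x"
    using perm_vec_inv[OF s] by (simp_all add: e_def e'_def)
  have L: "distr lborel borel e' = (lborel :: (real^'d) measure)"
    using lborel_perm[OF bij_imp_bij_inv[OF s]] by (simp add: e'_def)
  have e'm: "e' \<in> measurable lborel borel" by (simp add: e'_def)
  define G where "G = e \<circ> g \<circ> e'"
  define G' where "G' y = e \<circ> g' (e' y) \<circ> e'" for y
  have derG: "(G has_derivative G' y) (at y)" for y
  proof -
    have d1: "(e' has_derivative e') (at y)" unfolding e'_def
      by (rule bounded_linear_imp_has_derivative[OF bl_perm_vec])
    have d2: "((\<lambda>z. g (e' z)) has_derivative (\<lambda>h. g' (e' y) (e' h))) (at y)"
      using has_derivative_compose[OF d1 der] by (simp add: o_def)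
    have d3: "(e has_derivative e) (at (g (e' y)))" unfolding e_def
      by (rule bounded_linear_imp_has_derivative[OF bl_perm_vec])
    show ?thesis using has_derivative_compose[OF d2 d3]
      by (simp add: G_def G'_def o_def)
  qed
  have detG: "det (matrix (G' y)) = det (matrix (g' (e' y)))" for y
  proof -
    have "matrix (G' y) = (\<chi> i j. matrix (g' (e' y)) $ s i $ s j)"
      by (simp add: matrix_def G'_def e_def e'_def perm_vec_def[of s] vec_eq_iff perm_vec_axis[OF s])
    then show ?thesis using det_reindex[OF s] by simp
  qed
  have injG: "inj G"
    using inj unfolding G_def inj_def by (metis comp_apply ee)
  have fe: "(\<lambda>z. f (e' z)) \<in> borel_measurable borel"
    using measurable_compose[OF perm_vec_meas f] by (simp add: e'_def)
  have fe0: "0 \<le> f (e' z)" for z using f0 by simp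
  have cn: "(\<integral>\<^sup>+y. ennreal (\<bar>det (matrix (G' y))\<bar> * f (e' (G y))) \<partial>lborel)
       = (\<integral>\<^sup>+z. ennreal (f (e' z)) * indicator (range G) z \<partial>lborel)"
    using cov_n[OF injG derG fe fe0] by simp
  have cont: "continuous_on UNIV g"
    using der by (meson continuous_at_imp_continuous_on has_derivative_continuous)
  have gm: "g \<in> borel_measurable borel" using cont by (simp add: borel_measurable_continuous_onI)
  have op: "open (range g)" by (rule invariance_of_domain) (use cont inj in auto)
  have Hm: "(\<lambda>x. ennreal (\<bar>det (matrix (g' x))\<bar> * f (g x))) \<in> borel_measurable borel"
    using det_jac_meas[OF der] measurable_compose[OF gm f] by measurable
  have Km: "(\<lambda>y. ennreal (f y) * indicator (range g) y) \<in> borel_measurable borel"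
  proof -
    have rgb[measurable]: "range g \<in> sets borel" using op by simp
    show ?thesis using f by measurable
  qed
  have "(\<integral>\<^sup>+x. ennreal (\<bar>det (matrix (g' x))\<bar> * f (g x)) \<partial>lborel)
      = (\<integral>\<^sup>+x. ennreal (\<bar>det (matrix (g' x))\<bar> * f (g x)) \<partial>distr lborel borel e')"
    by (simp add: L)
  also have "\<dots> = (\<integral>\<^sup>+y. ennreal (\<bar>det (matrix (g' (e' y)))\<bar> * f (g (e' y))) \<partial>lborel)"
    using Hm by (subst nn_integral_distr[OF e'm]) auto
  also have "\<dots> = (\<integral>\<^sup>+z. ennreal (f (e' z)) * indicator (range G) z \<partial>lborel)"
  proof -
    have "\<And>y. e' (G y) = g (e' y)" by (simp add: G_def ee)
    then show ?thesis using cn by (simp only: detG)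
  qed
  also have "\<dots> = (\<integral>\<^sup>+z. ennreal (f (e' z)) * indicator (range g) (e' z) \<partial>lborel)"
  proof -
    have "z \<in> range G \<longleftrightarrow> e' z \<in> range g" for z
    proof
      assume "z \<in> range G" then obtain w where "z = G w" by auto
      then show "e' z \<in> range g" by (simp add: G_def ee)
    next
      assume "e' z \<in> range g" then obtain x where x: "e' z = g x" by auto
      have "z = e (e' z)" by (simp add: ee)
      also have "\<dots> = G (e x)" by (simp add: x G_def ee)
      finally show "z \<in> range G" by simp
    qed
    then show ?thesis by (simp add: indicator_def)
  qed
  also have "\<dots> = (\<integral>\<^sup>+y. ennreal (f y) * indicator (range g) y \<partial>distr lborel borel e')"
    using Km by (subst nn_integral_distr[OF e'm]) auto
  also have "\<dots> = (\<integral>\<^sup>+y. ennreal (f y) * indicator (range g) y \<partial>lborel)"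
    by (simp add: L)
  finally show ?thesis .
qed

lemma joint_sets: "sets (joint_WU qW muU q) = sets (lborel \<Otimes>\<^sub>M muU)"
  by (simp add: joint_WU_def)

lemma joint_fst:
  assumes muU: "sigma_finite_measure muU" and qW: "is_density lborel qW"
    and qm: "(\<lambda>(w,u). q w u) \<in> borel_measurable (lborel \<Otimes>\<^sub>M muU)"
    and qd: "\<forall>w. is_density muU (q w)"
  shows "distr (joint_WU qW muU q) lborel fst = density lborel qW"
proof (rule measure_eqI)
  interpret U: sigma_finite_measure muU by fact
  have qWm[measurable]: "qW \<in> borel_measurable lborel" using qW by (simp add: is_density_def)
  have fm: "fst \<in> measurable (joint_WU qW muU q) lborel"
    by (simp add: measurable_cong_sets[OF joint_sets refl])
  show "sets (distr (joint_WU qW muU q) lborel fst) = sets (density lborel qW)" by simp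
  fix A assume "A \<in> sets (distr (joint_WU qW muU q) lborel fst)"
  then have A[measurable]: "A \<in> sets borel" by simp
  have dm: "(\<lambda>(w,u). ennreal (qW w * q w u)) \<in> borel_measurable (lborel \<Otimes>\<^sub>M muU)"
    using qm by measurable
  have sp: "fst -` A \<inter> space (joint_WU qW muU q) = A \<times> space muU"
    by (auto simp: joint_WU_def space_pair_measure)
  have "emeasure (distr (joint_WU qW muU q) lborel fst) A = emeasure (joint_WU qW muU q) (A \<times> space muU)"
    using fm by (simp add: emeasure_distr sp)
  also have "\<dots> = (\<integral>\<^sup>+wu. (\<lambda>(w,u). ennreal (qW w * q w u)) wu * indicator (A \<times> space muU) wu \<partial>(lborel \<Otimes>\<^sub>M muU))"
    unfolding joint_WU_def using dm by (simp add: emeasure_density)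
  also have "\<dots> = (\<integral>\<^sup>+w. \<integral>\<^sup>+u. ennreal (qW w * q w u) * indicator (A \<times> space muU) (w,u) \<partial>muU \<partial>lborel)"
    using dm by (subst U.nn_integral_fst[symmetric]) (auto intro!: borel_measurable_times_ennreal)
  also have "\<dots> = (\<integral>\<^sup>+w. ennreal (qW w) * indicator A w \<partial>lborel)"
  proof (rule nn_integral_cong)
    fix w
    have "(\<integral>\<^sup>+u. ennreal (qW w * q w u) * indicator (A \<times> space muU) (w,u) \<partial>muU)
        = (\<integral>\<^sup>+u. (ennreal (qW w) * indicator A w) * ennreal (q w u) \<partial>muU)"
      using qW qd by (intro nn_integral_cong) (auto simp: is_density_def ennreal_mult indicator_def)
    also have "\<dots> = ennreal (qW w) * indicator A w * (\<integral>\<^sup>+u. ennreal (q w u) \<partial>muU)"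
      using qd by (intro nn_integral_cmult) (simp add: is_density_def)
    also have "\<dots> = ennreal (qW w) * indicator A w"
      using qd by (simp add: is_density_def)
    finally show "(\<integral>\<^sup>+u. ennreal (qW w * q w u) * indicator (A \<times> space muU) (w,u) \<partial>muU) = ennreal (qW w) * indicator A w" .
  qed
  also have "\<dots> = emeasure (density lborel qW) A"
    by (simp add: emeasure_density)
  finally show "emeasure (distr (joint_WU qW muU q) lborel fst) A = emeasure (density lborel qW) A" .
qed

lemma joint_prob:
  assumes muU: "sigma_finite_measure muU" and qW: "is_density lborel qW"
    and qm: "(\<lambda>(w,u). q w u) \<in> borel_measurable (lborel \<Otimes>\<^sub>M muU)"
    and qd: "\<forall>w. is_density muU (q w)"
  shows "prob_space (joint_WU qW muU q)"
proof
  have fm: "fst \<in> measurable (joint_WU qW muU q) lborel"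
    by (simp add: measurable_cong_sets[OF joint_sets refl])
  have "emeasure (joint_WU qW muU q) (space (joint_WU qW muU q))
      = emeasure (distr (joint_WU qW muU q) lborel fst) UNIV"
    using fm by (simp add: emeasure_distr)
  also have "\<dots> = emeasure (density lborel qW) UNIV"
    by (simp add: joint_fst[OF assms])
  also have "\<dots> = 1"
    using qW by (simp add: emeasure_density is_density_def)
  finally show "emeasure (joint_WU qW muU q) (space (joint_WU qW muU q)) = 1" .
qed

lemma elbo_le:
  fixes p :: "'x \<Rightarrow> real^'d::finite \<Rightarrow> real" and qW :: "real^'d \<Rightarrow> real" and muU :: "'u measure"
    and q r :: "real^'d \<Rightarrow> 'u \<Rightarrow> real" and G :: "real^'d \<Rightarrow> 'u \<Rightarrow> real^'d" and x :: 'x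
  assumes muU: "sigma_finite_measure muU" and qW: "is_density lborel qW"
    and p_meas: "p x \<in> borel_measurable lborel" and p_nonneg: "\<forall>z. 0 \<le> p x z"
    and p_marg_pos: "marginal p x > 0"
    and qm: "(\<lambda>(w,u). q w u) \<in> borel_measurable (lborel \<Otimes>\<^sub>M muU)" and qd: "\<forall>w. is_density muU (q w)"
    and rm: "(\<lambda>(z,u). r z u) \<in> borel_measurable (lborel \<Otimes>\<^sub>M muU)" and rd: "\<forall>z. is_density muU (r z)"
    and Gm: "(\<lambda>(w,u). G w u) \<in> measurable (lborel \<Otimes>\<^sub>M muU) lborel"
    and Gbij: "\<forall>u\<in>space muU. bij (\<lambda>w. G w u)"
    and Gdiff: "\<forall>u\<in>space muU. \<forall>w. (\<lambda>v. G v u) differentiable (at w)"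
    and pos: "AE wu in joint_WU qW muU q. 0 < L2_integrand p qW q r G x wu"
    and int: "integrable (joint_WU qW muU q) (\<lambda>wu. ln (L2_integrand p qW q r G x wu))"
    and ac: "absolutely_continuous (posterior_measure p x) (qZ qW muU q G)"
    and ik: "integrable (qZ qW muU q G) (entropy_density (exp 1) (posterior_measure p x) (qZ qW muU q G))"
  shows "KL (qZ qW muU q G) (posterior_measure p x) \<le> ln (marginal p x) - L2 p qW muU q r G x"
proof -
  interpret U: sigma_finite_measure muU by fact
  interpret PS: pair_sigma_finite lborel muU
    unfolding pair_sigma_finite_def using sigma_finite_lborel muU by simp
  define J where "J = joint_WU qW muU q"
  define Q where "Q = qZ qW muU q G"
  define P where "P = posterior_measure p x"
  define m where "m = marginal p x"
  define post where "post = posterior p x"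
  have m: "0 < m" using p_marg_pos by (simp add: m_def)
  have post_eq: "post = (\<lambda>z. p x z / m)" by (simp add: post_def m_def posterior_def fun_eq_iff)
  have pm[measurable]: "p x \<in> borel_measurable borel" using p_meas by simp
  have postm[measurable]: "post \<in> borel_measurable borel" unfolding post_eq by measurable
  have post0: "0 \<le> post z" for z using p_nonneg m by (simp add: post_eq)
  have P_eq: "P = density lborel (\<lambda>z. ennreal (post z))"
    by (simp add: P_def post_def posterior_measure_def)
  have Psets: "sets P = sets borel" by (simp add: P_eq)
  have Psf: "sigma_finite_measure P"
    unfolding P_eq by (subst sigma_finite_measure.sigma_finite_iff_density_finite[OF sigma_finite_lborel]) auto
  have Gmb[measurable]: "(\<lambda>(w,u). G w u) \<in> measurable (lborel \<Otimes>\<^sub>M muU) borel"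
    using Gm by simp
  have GmJ: "(\<lambda>(w,u). G w u) \<in> measurable J lborel"
    using Gm by (simp add: measurable_cong_sets[OF joint_sets refl] J_def)
  have Q_eq: "Q = distr J lborel (\<lambda>(w,u). G w u)" by (simp add: Q_def qZ_def J_def)
  have Qsets: "sets Q = sets borel" by (simp add: Q_eq)
  have Jprob: "prob_space J" unfolding J_def by (rule joint_prob[OF muU qW qm qd])
  interpret J: prob_space J by fact
  have Qprob: "prob_space Q" unfolding Q_eq by (rule J.prob_space_distr[OF GmJ])
  have Qsf: "sigma_finite_measure Q" using Qprob by (rule prob_space_imp_sigma_finite)
  define h where "h = RN_deriv P Q"
  have hm[measurable]: "h \<in> borel_measurable borel"
    using borel_measurable_RN_deriv[of P Q] by (simp add: h_def measurable_cong_sets[OF Psets refl])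
  have acPQ: "absolutely_continuous P Q" using ac by (simp add: P_def Q_def)
  have dens: "density P h = Q"
    unfolding h_def by (rule sigma_finite_measure.density_RN_deriv[OF Psf acPQ]) (simp add: Qsets Psets)
  have hfin: "AE z in Q. h z \<noteq> \<infinity>"
    using sigma_finite_measure.RN_deriv_finite[OF Psf Qsf acPQ] absolutely_continuous_AE[of Q P]
      acPQ Qsets Psets by (simp add: h_def)
  have hpos: "AE z in Q. 0 < h z"
    unfolding dens[symmetric] using hm by (subst AE_density) (auto simp: measurable_cong_sets[OF Psets refl])
  define A where "A = (\<lambda>wu. ln (enn2real (h (case_prod G wu))))"
  define B where "B = (\<lambda>wu. ln (L2_integrand p qW q r G x wu))"
  have lnhm[measurable]: "(\<lambda>z. ln (enn2real (h z))) \<in> borel_measurable borel" by measurable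
  have KL_eq: "KL Q P = integral\<^sup>L J A"
  proof -
    have "KL Q P = integral\<^sup>L Q (\<lambda>z. ln (enn2real (h z)))"
      by (simp add: KL_def KL_divergence_def entropy_density_def h_def log_def o_def)
    also have "\<dots> = integral\<^sup>L J A"
      unfolding Q_eq A_def by (rule integral_distr[OF GmJ]) measurable
    finally show ?thesis .
  qed
  have Aint: "integrable J A"
  proof -
    have "integrable Q (\<lambda>z. ln (enn2real (h z)))"
      using ik by (simp add: entropy_density_def h_def log_def o_def Q_def P_def)
    then show ?thesis
      unfolding Q_eq A_def using lnhm by (subst (asm) integrable_distr_eq[OF GmJ]) (auto simp: case_prod_unfold)
  qed
  have Bint: "integrable J B" using int by (simp add: B_def J_def)
  have L2_eq: "L2 p qW muU q r G x = integral\<^sup>L J B" by (simp add: L2_def B_def J_def)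
  define Y where "Y = (\<lambda>wu. exp (A wu + B wu - ln m))"
  have Am[measurable]: "A \<in> borel_measurable J" using Aint by auto
  have Bm[measurable]: "B \<in> borel_measurable J" using Bint by auto
  have Ym[measurable]: "Y \<in> borel_measurable J" unfolding Y_def by measurable
  have key: "(\<integral>\<^sup>+wu. ennreal (Y wu) \<partial>J) \<le> 1"
  proof -
    define dn where "dn = (\<lambda>(w,u). ennreal (qW w * q w u))"
    have qWm[measurable]: "qW \<in> borel_measurable borel" using qW by (simp add: is_density_def)
    have qW0: "0 \<le> qW w" for w using qW by (simp add: is_density_def)
    have q0: "u \<in> space muU \<Longrightarrow> 0 \<le> q w u" for w u using qd by (simp add: is_density_def)
    have r0: "u \<in> space muU \<Longrightarrow> 0 \<le> r z u" for z u using rd by (simp add: is_density_def)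
    have qm'[measurable]: "(\<lambda>(w,u). q w u) \<in> borel_measurable (lborel \<Otimes>\<^sub>M muU)" by (rule qm)
    have rm'[measurable]: "(\<lambda>(z,u). r z u) \<in> borel_measurable (lborel \<Otimes>\<^sub>M muU)" by (rule rm)
    have dnm[measurable]: "dn \<in> borel_measurable (lborel \<Otimes>\<^sub>M muU)" unfolding dn_def by measurable
    have J_eq: "J = density (lborel \<Otimes>\<^sub>M muU) dn" by (simp add: J_def joint_WU_def dn_def)
    have YmP[measurable]: "Y \<in> borel_measurable (lborel \<Otimes>\<^sub>M muU)"
      using Ym by (simp add: measurable_cong_sets[OF joint_sets refl] J_def)
    define good where "good = (\<lambda>wu. 0 < L2_integrand p qW q r G x wu \<and> 0 < h (case_prod G wu) \<and> h (case_prod G wu) < \<infinity>)"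
    have hset: "{z \<in> space lborel. 0 < h z \<and> h z < \<infinity>} \<in> sets lborel"
    proof -
      have "{z \<in> space lborel. 0 < h z \<and> h z < \<infinity>} = h -` {0<..<\<infinity>} \<inter> space lborel" by auto
      moreover have "h -` {0<..<(\<infinity>::ennreal)} \<inter> space lborel \<in> sets lborel"
        by (rule measurable_sets[of h lborel borel]) (auto intro: borel_open)
      ultimately show ?thesis by simp
    qed
    have gJ: "AE wu in J. good wu"
    proof -
      have "AE z in Q. 0 < h z \<and> h z < \<infinity>" using hpos hfin by eventually_elim (auto simp: top.not_eq_extremum)
      then have "AE wu in J. 0 < h (case_prod G wu) \<and> h (case_prod G wu) < \<infinity>"
        unfolding Q_eq by (subst (asm) AE_distr_iff[OF GmJ hset]) (simp add: case_prod_unfold)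
      with pos show ?thesis unfolding good_def J_def by eventually_elim auto
    qed
    have gP: "AE wu in lborel \<Otimes>\<^sub>M muU. 0 < dn wu \<longrightarrow> good wu"
      using gJ unfolding J_eq by (subst (asm) AE_density[OF dnm])
    then obtain N where N1: "{wu \<in> space (lborel \<Otimes>\<^sub>M muU). \<not> (0 < dn wu \<longrightarrow> good wu)} \<subseteq> N"
      and N2: "emeasure (lborel \<Otimes>\<^sub>M muU) N = 0" and N3: "N \<in> sets (lborel \<Otimes>\<^sub>M muU)"
      by (rule AE_E)
    have "AE wu in lborel \<Otimes>\<^sub>M muU. wu \<notin> N" using N2 N3 by (intro AE_not_in) (auto simp: null_sets_def)
    then have "AE w in lborel. AE u in muU. (w,u) \<notin> N" by (rule PS.AE_pair)
    moreover have "{wu \<in> space (lborel \<Otimes>\<^sub>M muU). (fst wu, snd wu) \<notin> N} \<in> sets (lborel \<Otimes>\<^sub>M muU)"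
    proof -
      have "{wu \<in> space (lborel \<Otimes>\<^sub>M muU). (fst wu, snd wu) \<notin> N} = space (lborel \<Otimes>\<^sub>M muU) - N" by auto
      then show ?thesis using sets.compl_sets[OF N3] by (simp only:)
    qed
    ultimately have "AE u in muU. AE w in lborel. (w,u) \<notin> N"
      using PS.AE_commute[of "\<lambda>w u. (w,u) \<notin> N"] by simp
    then have AEu: "AE u in muU. u \<in> space muU \<and> (AE w in lborel. 0 < dn (w,u) \<longrightarrow> good (w,u))"
      using AE_space[of muU]
    proof eventually_elim
      case (elim u)
      then have "AE w in lborel. (w,u) \<notin> N" by simp
      then have "AE w in lborel. 0 < dn (w,u) \<longrightarrow> good (w,u)"
      proof eventually_elim
        case (elim w)
        then show ?case using N1 \<open>u \<in> space muU\<close> by (auto simp: space_pair_measure)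
      qed
      with elim show ?case by simp
    qed
    have inner: "(\<integral>\<^sup>+w. dn (w,u) * ennreal (Y (w,u)) \<partial>lborel) \<le> (\<integral>\<^sup>+z. ennreal (enn2real (h z) * post z * r z u) \<partial>lborel)"
      if u: "u \<in> space muU" and AEw: "AE w in lborel. 0 < dn (w,u) \<longrightarrow> good (w,u)" for u
    proof -
      define g where "g = (\<lambda>v. G v u)"
      define g' where "g' = (\<lambda>w. frechet_derivative g (at w))"
      have der: "(g has_derivative g' w) (at w)" for w
        using Gdiff u by (simp add: g_def g'_def frechet_derivative_works)
      have injg: "inj g" using Gbij u by (simp add: g_def bij_is_inj)
      define K where "K = (\<lambda>z. enn2real (h z) * post z * r z u)"
      have rum: "(\<lambda>z. r z u) \<in> borel_measurable borel"
        using measurable_compose[OF measurable_Pair2'[OF u] rm] by simp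
      have Km: "K \<in> borel_measurable borel" unfolding K_def using rum by measurable
      have K0: "0 \<le> K z" for z using post0 r0 u by (simp add: K_def)
      have "(\<integral>\<^sup>+w. dn (w,u) * ennreal (Y (w,u)) \<partial>lborel) \<le> (\<integral>\<^sup>+w. ennreal (\<bar>det (matrix (g' w))\<bar> * K (g w)) \<partial>lborel)"
      proof (rule nn_integral_mono_AE)
        show "AE w in lborel. dn (w,u) * ennreal (Y (w,u)) \<le> ennreal (\<bar>det (matrix (g' w))\<bar> * K (g w))"
          using AEw
        proof eventually_elim
          case (elim w)
          show ?case
          proof (cases "qW w * q w u = 0")
            case True then have "dn (w,u) = 0" by (simp only: dn_def case_prod_conv ennreal_0)
            then show ?thesis by simp
          next
            case False
            then have qq: "0 < qW w * q w u" using qW0[of w] q0[OF u, of w] by (simp add: less_le)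
            then have gd: "good (w,u)" using elim by (simp add: dn_def)
            define H where "H = h (G w u)"
            define L where "L = L2_integrand p qW q r G x (w,u)"
            define dj where "dj = det (matrix (g' w))"
            have L: "0 < L" "0 < H" "H < \<infinity>" using gd by (auto simp: good_def L_def H_def)
            have eH: "0 < enn2real H" using L by (simp add: enn2real_positive_iff)
            have Ldef: "L = p x (g w) * r (g w) u / (qW w * q w u * inverse \<bar>dj\<bar>)"
              by (simp add: L_def L2_integrand_def jacdet_def g_def g'_def dj_def)
            have dj0: "dj \<noteq> 0" using L(1) Ldef by auto
            have YY: "Y (w,u) = enn2real H * L / m"
              using eH L(1) m by (simp add: Y_def A_def B_def H_def L_def exp_diff exp_add)
            have qa: "qW w \<noteq> 0" "q w u \<noteq> 0" using qq by auto
            have eq: "qW w * q w u * Y (w,u) = \<bar>dj\<bar> * K (g w)"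
              using qa dj0 m unfolding YY Ldef K_def H_def post_eq
              by (simp add: g_def field_simps)
            have Y0: "0 \<le> Y (w,u)" by (simp add: Y_def)
            have "dn (w,u) * ennreal (Y (w,u)) = ennreal (qW w * q w u * Y (w,u))"
              using qq Y0 by (simp add: dn_def ennreal_mult)
            also have "\<dots> = ennreal (\<bar>det (matrix (g' w))\<bar> * K (g w))" by (simp add: eq dj_def)
            finally show ?thesis by simp
          qed
        qed
      qed
      also have "\<dots> = (\<integral>\<^sup>+z. ennreal (K z) * indicator (range g) z \<partial>lborel)"
        by (rule cov_d[OF injg der Km K0])
      also have "\<dots> \<le> (\<integral>\<^sup>+z. ennreal (K z) \<partial>lborel)"
        by (intro nn_integral_mono) (simp add: indicator_def)
      finally show ?thesis by (simp add: K_def)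
    qed
    have Rm: "(\<lambda>(z,u). ennreal (enn2real (h z) * post z * r z u)) \<in> borel_measurable (lborel \<Otimes>\<^sub>M muU)"
      by measurable
    have "(\<integral>\<^sup>+wu. ennreal (Y wu) \<partial>J) = (\<integral>\<^sup>+wu. dn wu * ennreal (Y wu) \<partial>(lborel \<Otimes>\<^sub>M muU))"
      unfolding J_eq by (rule nn_integral_density) measurable
    also have "\<dots> = (\<integral>\<^sup>+u. \<integral>\<^sup>+w. dn (w,u) * ennreal (Y (w,u)) \<partial>lborel \<partial>muU)"
      by (rule PS.nn_integral_snd[symmetric]) measurable
    also have "\<dots> \<le> (\<integral>\<^sup>+u. \<integral>\<^sup>+z. ennreal (enn2real (h z) * post z * r z u) \<partial>lborel \<partial>muU)"
    proof (rule nn_integral_mono_AE)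
      show "AE u in muU. (\<integral>\<^sup>+w. dn (w,u) * ennreal (Y (w,u)) \<partial>lborel) \<le> (\<integral>\<^sup>+z. ennreal (enn2real (h z) * post z * r z u) \<partial>lborel)"
        using AEu
      proof eventually_elim
        case (elim u)
        then show ?case using inner[of u] by blast
      qed
    qed
    also have "\<dots> = (\<integral>\<^sup>+z. \<integral>\<^sup>+u. ennreal (enn2real (h z) * post z * r z u) \<partial>muU \<partial>lborel)"
      using PS.nn_integral_snd[OF Rm] U.nn_integral_fst[OF Rm] by simp
    also have "\<dots> = (\<integral>\<^sup>+z. ennreal (enn2real (h z) * post z) \<partial>lborel)"
    proof (rule nn_integral_cong)
      fix z
      have "(\<integral>\<^sup>+u. ennreal (enn2real (h z) * post z * r z u) \<partial>muU) = (\<integral>\<^sup>+u. ennreal (enn2real (h z) * post z) * ennreal (r z u) \<partial>muU)"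
        using post0 r0 by (intro nn_integral_cong) (simp add: ennreal_mult)
      also have "\<dots> = ennreal (enn2real (h z) * post z) * (\<integral>\<^sup>+u. ennreal (r z u) \<partial>muU)"
        using rd by (intro nn_integral_cmult) (simp add: is_density_def)
      also have "\<dots> = ennreal (enn2real (h z) * post z)"
        using rd by (simp add: is_density_def)
      finally show "(\<integral>\<^sup>+u. ennreal (enn2real (h z) * post z * r z u) \<partial>muU) = ennreal (enn2real (h z) * post z)" .
    qed
    also have "\<dots> \<le> (\<integral>\<^sup>+z. ennreal (post z) * h z \<partial>lborel)"
    proof (rule nn_integral_mono)
      fix z
      have "ennreal (enn2real (h z) * post z) = ennreal (post z) * ennreal (enn2real (h z))"
        using post0 by (simp add: ennreal_mult mult.commute)
      also have "\<dots> \<le> ennreal (post z) * h z"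
        by (intro mult_left_mono) (auto simp: ennreal_enn2real_if)
      finally show "ennreal (enn2real (h z) * post z) \<le> ennreal (post z) * h z" .
    qed
    also have "\<dots> = (\<integral>\<^sup>+z. h z \<partial>P)"
      unfolding P_eq by (rule nn_integral_density[symmetric]) measurable
    also have "\<dots> = emeasure (density P h) (space P)"
      using hm by (subst emeasure_density) (auto simp: measurable_cong_sets[OF Psets refl])
    also have "\<dots> = emeasure Q (space Q)"
      using dens by (simp add: P_eq Q_eq)
    also have "\<dots> = 1"
      by (rule prob_space.emeasure_space_1[OF Qprob])
    finally show ?thesis .
  qed
  have Yint: "integrable J Y"
  proof (rule integrableI_bounded)
    show "Y \<in> borel_measurable J" by fact
    have "(\<integral>\<^sup>+wu. ennreal (norm (Y wu)) \<partial>J) = (\<integral>\<^sup>+wu. ennreal (Y wu) \<partial>J)"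
      by (simp add: Y_def)
    also have "\<dots> < \<infinity>" using key by (simp add: le_less_trans)
    finally show "(\<integral>\<^sup>+wu. ennreal (norm (Y wu)) \<partial>J) < \<infinity>" .
  qed
  have EY: "integral\<^sup>L J Y \<le> 1"
  proof -
    have "ennreal (integral\<^sup>L J Y) = (\<integral>\<^sup>+wu. ennreal (Y wu) \<partial>J)"
      using Yint by (subst nn_integral_eq_integral) (auto simp: Y_def)
    with key show ?thesis by (simp add: ennreal_le_1[symmetric] del: ennreal_le_1)
  qed
  have "integral\<^sup>L J (\<lambda>wu. A wu + B wu - ln m) \<le> integral\<^sup>L J (\<lambda>wu. Y wu - 1)"
  proof (rule integral_mono)
    show "integrable J (\<lambda>wu. A wu + B wu - ln m)" using Aint Bint by auto
    show "integrable J (\<lambda>wu. Y wu - 1)" using Yint by auto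
    fix wu show "A wu + B wu - ln m \<le> Y wu - 1"
      using exp_ge_add_one_self[of "A wu + B wu - ln m"] unfolding Y_def by linarith
  qed
  also have "\<dots> = integral\<^sup>L J Y - 1"
    using Yint by (simp add: J.prob_space)
  finally have "integral\<^sup>L J A + integral\<^sup>L J B - ln m \<le> integral\<^sup>L J Y - 1"
    using Aint Bint by (simp add: J.prob_space)
  with EY have "integral\<^sup>L J A \<le> ln m - integral\<^sup>L J B" by simp
  then show ?thesis
    using KL_eq L2_eq by (simp add: Q_def P_def m_def)
qed

lemma psi_ge:
  fixes p :: "'x \<Rightarrow> real^'d::finite \<Rightarrow> real" and qW :: "real^'d \<Rightarrow> real" and muU :: "'u measure"
    and q r :: "real^'d \<Rightarrow> 'u \<Rightarrow> real" and G :: "real^'d \<Rightarrow> 'u \<Rightarrow> real^'d" and x :: 'x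
    and g :: "real^'d \<Rightarrow> real^'d" and rho :: "'u \<Rightarrow> real"
  assumes muU: "sigma_finite_measure muU" and qW: "is_density lborel qW"
    and p_meas: "p x \<in> borel_measurable lborel" and p_nonneg: "\<forall>z. 0 \<le> p x z"
    and p_marg_pos: "marginal p x > 0"
    and qm: "(\<lambda>(w,u). q w u) \<in> borel_measurable (lborel \<Otimes>\<^sub>M muU)" and qd: "\<forall>w. is_density muU (q w)"
    and Gdiff: "\<forall>u\<in>space muU. \<forall>w. (\<lambda>v. G v u) differentiable (at w)"
    and g_bij: "bij g"
    and G_psi: "\<forall>u\<in>space muU. \<forall>w. G w u = g w"
    and rho: "is_density muU rho"
    and q_psi: "\<forall>w. \<forall>u\<in>space muU. q w u = rho u"
    and r_psi: "\<forall>z. \<forall>u\<in>space muU. r z u = rho u"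
    and pos: "AE wu in joint_WU qW muU q. 0 < L2_integrand p qW q r G x wu"
    and int: "integrable (joint_WU qW muU q) (\<lambda>wu. ln (L2_integrand p qW q r G x wu))"
    and ac: "absolutely_continuous (posterior_measure p x) (distr (density lborel qW) lborel g)"
  shows "ln (marginal p x) - L2 p qW muU q r G x \<le> KL (distr (density lborel qW) lborel g) (posterior_measure p x)"
proof -
  interpret U: sigma_finite_measure muU by fact
  define J where "J = joint_WU qW muU q"
  define MW where "MW = density lborel qW"
  define \<nu> where "\<nu> = distr MW lborel g"
  define P where "P = posterior_measure p x"
  define m where "m = marginal p x"
  define post where "post = posterior p x"
  have m: "0 < m" using p_marg_pos by (simp add: m_def)
  have post_eq: "post = (\<lambda>z. p x z / m)" by (simp add: post_def m_def posterior_def fun_eq_iff)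
  have pm[measurable]: "p x \<in> borel_measurable borel" using p_meas by simp
  have postm[measurable]: "post \<in> borel_measurable borel" unfolding post_eq by measurable
  have post0: "0 \<le> post z" for z using p_nonneg m by (simp add: post_eq)
  have P_eq: "P = density lborel (\<lambda>z. ennreal (post z))"
    by (simp add: P_def post_def posterior_measure_def)
  have Psets: "sets P = sets borel" by (simp add: P_eq)
  have Psf: "sigma_finite_measure P"
    unfolding P_eq by (subst sigma_finite_measure.sigma_finite_iff_density_finite[OF sigma_finite_lborel]) auto
  have qWm[measurable]: "qW \<in> borel_measurable borel" using qW by (simp add: is_density_def)
  have qW0: "0 \<le> qW w" for w using qW by (simp add: is_density_def)
  have rho0: "u \<in> space muU \<Longrightarrow> 0 \<le> rho u" for u using rho by (simp add: is_density_def)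
  obtain u0 where u0: "u0 \<in> space muU"
  proof (cases "space muU = {}")
    case True
    then have "(\<integral>\<^sup>+u. ennreal (rho u) \<partial>muU) = 0" by (simp add: nn_integral_empty)
    then show ?thesis using rho by (simp add: is_density_def)
  qed blast
  have gG: "(\<lambda>v. G v u) = g" if "u \<in> space muU" for u using G_psi that by auto
  define dg where "dg = (\<lambda>w. det (matrix (frechet_derivative g (at w))))"
  have der: "(g has_derivative frechet_derivative g (at w)) (at w)" for w
    using Gdiff u0 gG[OF u0] by (metis frechet_derivative_works)
  have injg: "inj g" using g_bij by (rule bij_is_inj)
  have surjg: "range g = UNIV" using g_bij by (simp add: bij_is_surj)
  have cont: "continuous_on UNIV g"
    using der by (meson continuous_at_imp_continuous_on has_derivative_continuous)
  have gm[measurable]: "g \<in> borel_measurable borel" using cont by (simp add: borel_measurable_continuous_onI)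
  have contI: "continuous_on UNIV (inv g)"
    using continuous_on_inverse_open[of UNIV g "inv g"] cont injg surjg by (simp add: inv_f_f)
  have igm: "inv g \<in> borel_measurable borel" using contI by (simp add: borel_measurable_continuous_onI)
  have gB: "g ` B \<in> sets borel" if "B \<in> sets borel" for B
  proof -
    have "g ` B = inv g -` B \<inter> space borel"
      using g_bij by (auto simp: inv_f_f[OF injg] bij_is_surj surj_f_inv_f image_iff) (metis surj_f_inv_f[OF bij_is_surj[OF g_bij]])
    then show ?thesis using measurable_sets[OF igm that] by simp
  qed
  have dgm[measurable]: "dg \<in> borel_measurable borel" unfolding dg_def by (rule det_jac_meas[OF der])
  have MWprob: "prob_space MW"
    using qW by (intro prob_spaceI) (simp add: MW_def emeasure_density is_density_def)
  have \<nu>prob: "prob_space \<nu>" unfolding \<nu>_def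
    by (rule prob_space.prob_space_distr[OF MWprob]) (simp add: MW_def)
  have \<nu>sf: "sigma_finite_measure \<nu>" using \<nu>prob by (rule prob_space_imp_sigma_finite)
  have \<nu>sets: "sets \<nu> = sets borel" by (simp add: \<nu>_def)
  define h where "h = RN_deriv P \<nu>"
  have hm[measurable]: "h \<in> borel_measurable borel"
    using borel_measurable_RN_deriv[of P \<nu>] by (simp add: h_def measurable_cong_sets[OF Psets refl])
  have acP: "absolutely_continuous P \<nu>" using ac by (simp add: P_def \<nu>_def MW_def)
  have dens: "density P h = \<nu>"
    unfolding h_def by (rule sigma_finite_measure.density_RN_deriv[OF Psf acP]) (simp add: \<nu>sets Psets)
  have hfinP: "AE z in P. h z \<noteq> \<infinity>"
    using sigma_finite_measure.RN_deriv_finite[OF Psf \<nu>sf acP] \<nu>sets Psets by (simp add: h_def)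
  define F where "F = (\<lambda>z. enn2real (h z) * post z)"
  define k where "k = (\<lambda>w. \<bar>dg w\<bar> * F (g w))"
  have Fm[measurable]: "F \<in> borel_measurable borel" unfolding F_def by measurable
  have F0: "0 \<le> F z" for z using post0 by (simp add: F_def)
  have km[measurable]: "k \<in> borel_measurable borel" unfolding k_def by measurable
  have k0: "0 \<le> k w" for w using F0 by (simp add: k_def)
  have densEq: "density lborel (\<lambda>w. ennreal (qW w)) = density lborel (\<lambda>w. ennreal (k w))"
  proof (rule measure_eqI)
    show "sets (density lborel (\<lambda>w. ennreal (qW w))) = sets (density lborel (\<lambda>w. ennreal (k w)))" by simp
    fix B assume "B \<in> sets (density lborel (\<lambda>w. ennreal (qW w)))"
    then have B[measurable]: "B \<in> sets borel" by simp
    have gBm[measurable]: "g ` B \<in> sets borel" by (rule gB[OF B])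
    have ind: "indicator B w = (indicator (g ` B) (g w) :: real)" for w
      using injg by (auto simp: indicator_def inj_image_mem_iff)
    have FBm: "(\<lambda>z. F z * indicator (g ` B) z) \<in> borel_measurable borel" by measurable
    have FB0: "0 \<le> F z * indicator (g ` B) z" for z using F0 by simp
    have "emeasure (density lborel (\<lambda>w. ennreal (k w))) B = (\<integral>\<^sup>+w. ennreal (k w) * indicator B w \<partial>lborel)"
      by (simp add: emeasure_density)
    also have "\<dots> = (\<integral>\<^sup>+w. ennreal (\<bar>det (matrix (frechet_derivative g (at w)))\<bar> * (F (g w) * indicator (g ` B) (g w))) \<partial>lborel)"
      by (intro nn_integral_cong) (simp add: k_def dg_def flip: ind split: split_indicator)
    also have "\<dots> = (\<integral>\<^sup>+z. ennreal (F z * indicator (g ` B) z) * indicator (range g) z \<partial>lborel)"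
      by (rule cov_d[OF injg der FBm FB0])
    also have "\<dots> = (\<integral>\<^sup>+z. ennreal (post z) * (ennreal (enn2real (h z)) * indicator (g ` B) z) \<partial>lborel)"
      by (intro nn_integral_cong) (simp add: surjg F_def ennreal_mult post0 mult.commute split: split_indicator)
    also have "\<dots> = (\<integral>\<^sup>+z. ennreal (enn2real (h z)) * indicator (g ` B) z \<partial>P)"
      unfolding P_eq by (rule nn_integral_density[symmetric]) measurable
    also have "\<dots> = (\<integral>\<^sup>+z. h z * indicator (g ` B) z \<partial>P)"
      using hfinP by (intro nn_integral_cong_AE) (auto elim!: eventually_mono simp: top.not_eq_extremum)
    also have "\<dots> = emeasure \<nu> (g ` B)"
      unfolding dens[symmetric] using hm gBm
      by (subst emeasure_density) (auto simp: measurable_cong_sets[OF Psets refl] Psets)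
    also have "\<dots> = emeasure MW B"
    proof -
      have "g -` (g ` B) \<inter> space MW = B" using injg by (auto simp: MW_def inj_image_mem_iff dest: injD)
      then show ?thesis unfolding \<nu>_def using gBm by (subst emeasure_distr) (auto simp: MW_def)
    qed
    also have "\<dots> = emeasure (density lborel (\<lambda>w. ennreal (qW w))) B"
      by (simp add: MW_def)
    finally show "emeasure (density lborel (\<lambda>w. ennreal (qW w))) B = emeasure (density lborel (\<lambda>w. ennreal (k w))) B" ..
  qed
  have AEk: "AE w in lborel. qW w = k w"
  proof -
    have "AE w in lborel. ennreal (qW w) = ennreal (k w)"
      by (rule sigma_finite_measure.density_unique[OF sigma_finite_lborel _ _ densEq]) simp_all
    then show ?thesis by eventually_elim (simp add: qW0 k0)
  qed
  have Jprob: "prob_space J" unfolding J_def by (rule joint_prob[OF muU qW qm qd])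
  interpret J: prob_space J by fact
  have Jfst: "distr J lborel fst = MW" unfolding J_def MW_def by (rule joint_fst[OF muU qW qm qd])
  have fstm: "fst \<in> measurable J lborel"
    by (simp add: measurable_cong_sets[OF joint_sets refl] J_def)
  define dn where "dn = (\<lambda>(w,u). ennreal (qW w * q w u))"
  have qm'[measurable]: "(\<lambda>(w,u). q w u) \<in> borel_measurable (lborel \<Otimes>\<^sub>M muU)" by (rule qm)
  have dnm[measurable]: "dn \<in> borel_measurable (lborel \<Otimes>\<^sub>M muU)" unfolding dn_def by measurable
  have J_eq: "J = density (lborel \<Otimes>\<^sub>M muU) dn" by (simp add: J_def joint_WU_def dn_def)
  have AE1: "AE wu in J. 0 < qW (fst wu) * q (fst wu) (snd wu)"
    unfolding J_eq by (subst AE_density[OF dnm]) (auto simp: dn_def split: prod.split)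
  have AE2: "AE wu in J. qW (fst wu) = k (fst wu)"
  proof -
    have "AE w in MW. qW w = k w"
      unfolding MW_def by (subst AE_density) (simp, use AEk in \<open>auto elim: eventually_mono\<close>)
    then have "AE w in distr J lborel fst. qW w = k w" using Jfst by (simp only:)
    then show ?thesis by (subst (asm) AE_distr_iff[OF fstm]) simp_all
  qed
  have AE3: "AE wu in J. snd wu \<in> space muU"
    using AE_space[of J] by eventually_elim (auto simp: J_eq space_pair_measure)
  define B where "B = (\<lambda>wu. ln (L2_integrand p qW q r G x wu))"
  have Bint: "integrable J B" using int by (simp add: B_def J_def)
  have Bm[measurable]: "B \<in> borel_measurable J" using Bint by auto
  have AEeq: "AE wu in J. ln (enn2real (h (g (fst wu)))) = ln m - B wu"
    using AE1 AE2 AE3 pos unfolding J_def[symmetric]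
  proof eventually_elim
    case (elim wu)
    obtain w u where wu: "wu = (w,u)" by (cases wu)
    have uS: "u \<in> space muU" using elim wu by simp
    have qu: "q w u = rho u" using q_psi uS by simp
    have ru: "r z u = rho u" for z using r_psi uS by simp
    have Gu: "G w u = g w" using G_psi uS by simp
    have jd: "jacdet G w u = dg w" using gG[OF uS] by (simp add: jacdet_def dg_def)
    have qq: "0 < qW w * rho u" using elim wu qu by simp
    have qWp: "0 < qW w" and rp: "0 < rho u"
      using qq qW0[of w] rho0[OF uS] by (auto simp: zero_less_mult_iff)
    define L where "L = L2_integrand p qW q r G x (w,u)"
    have L0: "0 < L" using elim wu by (simp add: L_def)
    have Ldef: "L = p x (g w) * rho u / (qW w * rho u * inverse \<bar>dg w\<bar>)"
      by (simp add: L_def L2_integrand_def qu ru Gu jd)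
    have dg0: "dg w \<noteq> 0"
    proof
      assume "dg w = 0" then have "L = 0" unfolding Ldef by simp
      with L0 show False by simp
    qed
    have kk: "qW w = \<bar>dg w\<bar> * (enn2real (h (g w)) * (p x (g w) / m))"
      using elim wu by (simp add: k_def F_def post_eq)
    have eH: "0 < enn2real (h (g w))" and pp: "0 < p x (g w)"
      using kk qWp m p_nonneg[rule_format, of "g w"]
      by (auto simp: zero_less_mult_iff less_le)
    have "L = m / enn2real (h (g w))"
      unfolding Ldef using kk dg0 rp m eH pp qWp by (simp add: field_simps)
    then have "ln L = ln m - ln (enn2real (h (g w)))" using m eH by (simp add: ln_div)
    then show ?case by (simp add: wu B_def L_def)
  qed
  have lnhm[measurable]: "(\<lambda>z. ln (enn2real (h z))) \<in> borel_measurable borel" by measurable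
  have "KL \<nu> P = integral\<^sup>L \<nu> (\<lambda>z. ln (enn2real (h z)))"
    by (simp add: KL_def KL_divergence_def entropy_density_def h_def log_def o_def)
  also have "\<dots> = integral\<^sup>L MW (\<lambda>w. ln (enn2real (h (g w))))"
    unfolding \<nu>_def by (rule integral_distr) (simp_all add: MW_def)
  also have "\<dots> = integral\<^sup>L J (\<lambda>wu. ln (enn2real (h (g (fst wu)))))"
    unfolding Jfst[symmetric] by (rule integral_distr[OF fstm]) measurable
  also have "\<dots> = integral\<^sup>L J (\<lambda>wu. ln m - B wu)"
  proof (rule integral_cong_AE)
    have "(\<lambda>w. ln (enn2real (h (g w)))) \<in> borel_measurable lborel" by measurable
    then show "(\<lambda>wu. ln (enn2real (h (g (fst wu))))) \<in> borel_measurable J"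
      using measurable_compose[OF fstm] by blast
    show "(\<lambda>wu. ln m - B wu) \<in> borel_measurable J" by measurable
    show "AE wu in J. ln (enn2real (h (g (fst wu)))) = ln m - B wu" by (rule AEeq)
  qed
  also have "\<dots> = ln m - integral\<^sup>L J B"
    using Bint by (simp add: J.prob_space)
  also have "integral\<^sup>L J B = L2 p qW muU q r G x" by (simp add: L2_def B_def J_def)
  finally show ?thesis by (simp add: \<nu>_def MW_def P_def m_def)
qed

theorem proposition1:
  fixes p :: "'x \<Rightarrow> real^'d \<Rightarrow> real"
    and qW :: "real^'d \<Rightarrow> real"
    and muU :: "'u measure"
    and Phi :: "'phi set"
    and qUW rUZ :: "'phi \<Rightarrow> real^'d \<Rightarrow> 'u \<Rightarrow> real"
    and G :: "'phi \<Rightarrow> real^'d \<Rightarrow> 'u \<Rightarrow> real^'d"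
    and psi phi :: 'phi
    and g :: "real^'d \<Rightarrow> real^'d"
    and rho :: "'u \<Rightarrow> real"
    and x :: 'x
  assumes muU: "sigma_finite_measure muU"
    and qW: "is_density lborel qW"
    and p_meas: "p x \<in> borel_measurable lborel"
    and p_nonneg: "\<forall>z. 0 \<le> p x z"
    and p_int: "integrable lborel (p x)"
    and p_marg_pos: "marginal p x > 0"
    and qUW_meas: "\<forall>f\<in>Phi. (\<lambda>(w,u). qUW f w u) \<in> borel_measurable (lborel \<Otimes>\<^sub>M muU)"
    and qUW_dens: "\<forall>f\<in>Phi. \<forall>w. is_density muU (qUW f w)"
    and rUZ_meas: "\<forall>f\<in>Phi. (\<lambda>(z,u). rUZ f z u) \<in> borel_measurable (lborel \<Otimes>\<^sub>M muU)"
    and rUZ_dens: "\<forall>f\<in>Phi. \<forall>z. is_density muU (rUZ f z)"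
    and G_meas: "\<forall>f\<in>Phi. (\<lambda>(w,u). G f w u) \<in> measurable (lborel \<Otimes>\<^sub>M muU) lborel"
    and G_bij: "\<forall>f\<in>Phi. \<forall>u\<in>space muU. bij (\<lambda>w. G f w u)"
    and G_diff: "\<forall>f\<in>Phi. \<forall>u\<in>space muU. \<forall>w. (\<lambda>v. G f v u) differentiable (at w)"
    and psi: "psi \<in> Phi"
    and g_bij: "bij g"
    and G_psi: "\<forall>u\<in>space muU. \<forall>w. G psi w u = g w"
    and rho: "is_density muU rho"
    and qUW_psi: "\<forall>w. \<forall>u\<in>space muU. qUW psi w u = rho u"
    and rUZ_psi: "\<forall>z. \<forall>u\<in>space muU. rUZ psi z u = rho u"
    and phi: "phi \<in> Phi"
    and wd_L2_pos: "\<forall>f\<in>{phi, psi}. AE wu in joint_WU qW muU (qUW f).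
                       0 < L2_integrand p qW (qUW f) (rUZ f) (G f) x wu"
    and wd_L2_int: "\<forall>f\<in>{phi, psi}. integrable (joint_WU qW muU (qUW f))
                       (\<lambda>wu. ln (L2_integrand p qW (qUW f) (rUZ f) (G f) x wu))"
    and wd_KL_phi_ac: "absolutely_continuous (posterior_measure p x) (qZ qW muU (qUW phi) (G phi))"
    and wd_KL_phi_int: "integrable (qZ qW muU (qUW phi) (G phi))
          (entropy_density (exp 1) (posterior_measure p x) (qZ qW muU (qUW phi) (G phi)))"
    and wd_KL_g_ac: "absolutely_continuous (posterior_measure p x) (distr (density lborel qW) lborel g)"
    and wd_KL_g_int: "integrable (distr (density lborel qW) lborel g)
          (entropy_density (exp 1) (posterior_measure p x) (distr (density lborel qW) lborel g))"
    and hyp: "L2 p qW muU (qUW phi) (rUZ phi) (G phi) x \<ge> L2 p qW muU (qUW psi) (rUZ psi) (G psi) x"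
  shows "KL (qZ qW muU (qUW phi) (G phi)) (posterior_measure p x)
           \<le> KL (distr (density lborel qW) lborel g) (posterior_measure p x)"
  proof -
  have phiP: "phi \<in> {phi, psi}" and psiP: "psi \<in> {phi, psi}" by simp_all
  have e1: "KL (qZ qW muU (qUW phi) (G phi)) (posterior_measure p x)
      \<le> ln (marginal p x) - L2 p qW muU (qUW phi) (rUZ phi) (G phi) x"
    by (rule elbo_le[OF muU qW p_meas p_nonneg p_marg_pos bspec[OF qUW_meas phi] bspec[OF qUW_dens phi]
        bspec[OF rUZ_meas phi] bspec[OF rUZ_dens phi] bspec[OF G_meas phi] bspec[OF G_bij phi]
        bspec[OF G_diff phi] bspec[OF wd_L2_pos phiP] bspec[OF wd_L2_int phiP] wd_KL_phi_ac wd_KL_phi_int])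
  have e2: "ln (marginal p x) - L2 p qW muU (qUW psi) (rUZ psi) (G psi) x
      \<le> KL (distr (density lborel qW) lborel g) (posterior_measure p x)"
    by (rule psi_ge[OF muU qW p_meas p_nonneg p_marg_pos bspec[OF qUW_meas psi] bspec[OF qUW_dens psi]
        bspec[OF G_diff psi] g_bij G_psi rho qUW_psi rUZ_psi bspec[OF wd_L2_pos psiP] bspec[OF wd_L2_int psiP]
        wd_KL_g_ac])
  show ?thesis using e1 e2 hyp by linarith
qed

end
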